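(* Let $\mathfrak B\in K_{\overline\alpha}$. Then there is a substructure $\mathfrak Z\subseteq\mathfrak B$ with $\delta(\mathfrak Z)=0$ such that every substructure $\mathfrak C\subseteq\mathfrak B$ with $\delta(\mathfrak C)=0$ satisfies $\mathfrak C\subseteq\mathfrak Z$.
   Context: Fix a finite relational language $L$ in which every relation symbol has arity at least $2$. $K_L$ is the class of all finite $L$-structures (including the empty one) in which every relation symbol is interpreted symmetrically and irreflexively. Fix $\overline\alpha:L\to(0,1]$, writing $\overline\alpha_E=\overline\alpha(E)$, such that it is not the case that all symbols of $L$ are binary and $\overline\alpha_E=1$ for all $E$. For $\mathfrak A\in K_L$ let $N_E(\mathfrak A)$ be the number of subsets of $A$ on which $E$ holds and $\delta(\mathfrak A)=|A|-\sum_{E}\overline\alpha_E N_E(\mathfrak A)$ (so $\delta(\emptyset)=0$). $K_{\overline\alpha}=\{\mathfrak A\in K_L:\delta(\mathfrak A')\ge0\text{ for all substructures }\mathfrak A'\subseteq\mathfrak A\}$. *)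

theory Defs
  imports Complex_Main
begin

text \<open>An L-structure with symmetric, irreflexive relations is given by a
universe A and, for every symbol E, the set of subsets of A (each of size ar E)
on which E holds.\<close>

definition is_KL_structure ::
  "'l set \<Rightarrow> ('l \<Rightarrow> nat) \<Rightarrow> 'a set \<Rightarrow> ('l \<Rightarrow> 'a set set) \<Rightarrow> bool" where
  "is_KL_structure L ar A R \<longleftrightarrow>
     finite A \<and> (\<forall>E\<in>L. R E \<subseteq> {S. S \<subseteq> A \<and> card S = ar E})"

definition induced_rel :: "('l \<Rightarrow> 'a set set) \<Rightarrow> 'a set \<Rightarrow> ('l \<Rightarrow> 'a set set)" where
  "induced_rel R X = (\<lambda>E. {S \<in> R E. S \<subseteq> X})"

definition delta ::
  "'l set \<Rightarrow> ('l \<Rightarrow> real) \<Rightarrow> 'a set \<Rightarrow> ('l \<Rightarrow> 'a set set) \<Rightarrow> real" where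
  "delta L alpha A R = real (card A) - (\<Sum>E\<in>L. alpha E * real (card (R E)))"

definition in_K_alpha ::
  "'l set \<Rightarrow> ('l \<Rightarrow> nat) \<Rightarrow> ('l \<Rightarrow> real) \<Rightarrow> 'a set \<Rightarrow> ('l \<Rightarrow> 'a set set) \<Rightarrow> bool" where
  "in_K_alpha L ar alpha A R \<longleftrightarrow>
     is_KL_structure L ar A R \<and>
     (\<forall>X\<subseteq>A. delta L alpha X (induced_rel R X) \<ge> 0)"

end

theory Submission
  imports Defs
begin

lemma card_ind_submod:
  assumes fin: "finite (R E)"
  shows "real (card (induced_rel R X E)) + real (card (induced_rel R Y E))
         \<le> real (card (induced_rel R (X \<union> Y) E)) + real (card (induced_rel R (X \<inter> Y) E))"
proof -
  let ?a = "induced_rel R X E" and ?b = "induced_rel R Y E"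
  have fa: "finite ?a" "finite ?b" using fin by (auto simp: induced_rel_def)
  have "card ?a + card ?b = card (?a \<union> ?b) + card (?a \<inter> ?b)"
    using card_Un_Int[OF fa] by simp
  moreover have "?a \<inter> ?b = induced_rel R (X \<inter> Y) E" by (auto simp: induced_rel_def)
  moreover have "card (?a \<union> ?b) \<le> card (induced_rel R (X \<union> Y) E)"
    by (rule card_mono) (use fin in \<open>auto simp: induced_rel_def\<close>)
  ultimately have "card ?a + card ?b \<le> card (induced_rel R (X \<union> Y) E) + card (induced_rel R (X \<inter> Y) E)" by simp
  then show ?thesis by (metis of_nat_add of_nat_le_iff)
qed

lemma delta_submod:
  assumes finL: "finite L" and pos: "\<forall>E\<in>L. 0 < alpha E"
    and fin: "\<forall>E\<in>L. finite (R E)" and X: "finite X" and Y: "finite Y"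
  shows "delta L alpha (X \<union> Y) (induced_rel R (X \<union> Y)) + delta L alpha (X \<inter> Y) (induced_rel R (X \<inter> Y))
     \<le> delta L alpha X (induced_rel R X) + delta L alpha Y (induced_rel R Y)"
proof -
  have c: "card (X \<union> Y) + card (X \<inter> Y) = card X + card Y" using card_Un_Int[OF X Y] by simp
  have ind: "\<And>Z E. induced_rel (induced_rel R Z) Z E = induced_rel R Z E" by (auto simp: induced_rel_def)
  have "(\<Sum>E\<in>L. alpha E * real (card (induced_rel R X E))) + (\<Sum>E\<in>L. alpha E * real (card (induced_rel R Y E)))
     \<le> (\<Sum>E\<in>L. alpha E * real (card (induced_rel R (X \<union> Y) E))) + (\<Sum>E\<in>L. alpha E * real (card (induced_rel R (X \<inter> Y) E)))"
  proof -
    have "\<And>E. E \<in> L \<Longrightarrow> alpha E * real (card (induced_rel R X E)) + alpha E * real (card (induced_rel R Y E))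
       \<le> alpha E * real (card (induced_rel R (X \<union> Y) E)) + alpha E * real (card (induced_rel R (X \<inter> Y) E))"
    proof -
      fix E assume "E \<in> L"
      then have "0 \<le> alpha E" "finite (R E)" using pos fin by auto
      from mult_left_mono[OF card_ind_submod[of R E X Y, OF this(2)] this(1)]
      show "?thesis E" by (simp add: distrib_left)
    qed
    then have "(\<Sum>E\<in>L. alpha E * real (card (induced_rel R X E)) + alpha E * real (card (induced_rel R Y E)))
       \<le> (\<Sum>E\<in>L. alpha E * real (card (induced_rel R (X \<union> Y) E)) + alpha E * real (card (induced_rel R (X \<inter> Y) E)))"
      by (rule sum_mono)
    then show ?thesis by (simp add: sum.distrib)
  qed
  then show ?thesis unfolding delta_def
    using c by (simp add: ind of_nat_add[symmetric] del: of_nat_add)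
qed

theorem proposition3p36:
  fixes L :: "'l set" and ar :: "'l \<Rightarrow> nat" and alpha :: "'l \<Rightarrow> real"
    and B :: "'a set" and R :: "'l \<Rightarrow> 'a set set"
  assumes "finite L"
    and "\<forall>E\<in>L. ar E \<ge> 2"
    and "\<forall>E\<in>L. 0 < alpha E \<and> alpha E \<le> 1"
    and "\<not> (\<forall>E\<in>L. ar E = 2 \<and> alpha E = 1)"
    and "in_K_alpha L ar alpha B R"
  shows "\<exists>Z\<subseteq>B. delta L alpha Z (induced_rel R Z) = 0 \<and>
           (\<forall>C\<subseteq>B. delta L alpha C (induced_rel R C) = 0 \<longrightarrow> C \<subseteq> Z)"
proof -
  have finB: "finite B" and relB: "\<forall>E\<in>L. R E \<subseteq> Pow B"
    and nonneg: "\<forall>X\<subseteq>B. delta L alpha X (induced_rel R X) \<ge> 0"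
    using assms(5) by (auto simp: in_K_alpha_def is_KL_structure_def)
  have finR: "\<forall>E\<in>L. finite (R E)" using relB finB by (meson finite_Pow_iff rev_finite_subset)
  have pos: "\<forall>E\<in>L. 0 < alpha E" using assms(3) by auto
  define F where "F = {C. C \<subseteq> B \<and> delta L alpha C (induced_rel R C) = 0}"
  have un: "X \<union> Y \<in> F" if "X \<in> F" "Y \<in> F" for X Y
  proof -
    have s: "X \<subseteq> B" "Y \<subseteq> B" using that F_def by auto
    then have fX: "finite X" "finite Y" using finB finite_subset by auto
    have "delta L alpha (X \<inter> Y) (induced_rel R (X \<inter> Y)) \<ge> 0"
      "delta L alpha (X \<union> Y) (induced_rel R (X \<union> Y)) \<ge> 0"
      using nonneg s by (meson inf.coboundedI1, meson le_sup_iff)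
    with delta_submod[OF assms(1) pos finR fX] that show ?thesis unfolding F_def using s by auto
  qed
  have nE: "\<forall>E\<in>L. {} \<notin> R E"
  proof
    fix E assume "E \<in> L"
    then have "R E \<subseteq> {S. S \<subseteq> B \<and> card S = ar E}" "ar E \<ge> 2"
      using assms(2,5) by (auto simp: in_K_alpha_def is_KL_structure_def)
    then show "{} \<notin> R E" by auto
  qed
  have "{S. S = {} \<and> S \<in> R E} = {}" if "E \<in> L" for E using nE that by auto
  then have "(\<Sum>x\<in>L. alpha x * real (card {S. S = {} \<and> S \<in> R x})) = 0"
    by (intro sum.neutral) simp
  then have emp: "{} \<in> F" unfolding F_def delta_def induced_rel_def by simp
  have "\<Union>G \<in> F" if "finite G" "G \<subseteq> F" for G
    using that
  proof (induction G rule: finite_induct)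
    case empty then show ?case using emp by simp
  next
    case (insert x G) then show ?case using un by simp
  qed
  moreover have "finite F" unfolding F_def using finB
    by (metis (no_types, lifting) Collect_mono Pow_def finite_Pow_iff finite_subset)
  ultimately have Z: "\<Union>F \<in> F" by blast
  show ?thesis
    apply (rule exI[of _ "\<Union>F"])
    using Z unfolding F_def by blast
qed

end
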